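(* Let $\lambda\in\mathbb{R}$, let $r,n\ge1$ be integers and let $z\in\mathbb{C}$. Then \[ \phi_{n,\lambda}^{(r,r)}(|z|^2)=\langle z|\prod_{k=0}^{n-1}\big[(a^{\dagger})^{r}a^{r}-k\lambda\big]|z\rangle=\sum_{p=0}^{nr}\sum_{k=p}^{nr}\frac{(-1)^{k-p}}{k!}\binom{k}{p}\big((p)_r\big)_{n,\lambda}\,(|z|^2)^{k}. \] In particular, when $|z|=1$, \[ \phi_{n,\lambda}^{(r,r)}=\langle z|\prod_{k=0}^{n-1}\big[(a^{\dagger})^{r}a^{r}-k\lambda\big]|z\rangle=\sum_{p=0}^{nr}\sum_{k=p}^{nr}\frac{(-1)^{k-p}}{k!}\binom{k}{p}\big((p)_r\big)_{n,\lambda}. \]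
   Context: Notation: $(x)_0=1$, $(x)_m=x(x-1)\cdots(x-m+1)$; $(y)_{0,\lambda}=1$, $(y)_{n,\lambda}=y(y-\lambda)\cdots(y-(n-1)\lambda)$. The boson annihilation and creation operators $a,a^{\dagger}$ satisfy $[a,a^{\dagger}]=aa^{\dagger}-a^{\dagger}a=1$ and act on the orthonormal number states $|m\rangle$ ($m=0,1,2,\dots$, $\langle m|n\rangle=\delta_{m,n}$) by $a|m\rangle=\sqrt{m}\,|m-1\rangle$, $a^{\dagger}|m\rangle=\sqrt{m+1}\,|m+1\rangle$. For $z\in\mathbb{C}$ the coherent state is $|z\rangle=e^{-|z|^2/2}\sum_{n\ge0}\frac{z^n}{\sqrt{n!}}|n\rangle$, so $a|z\rangle=z|z\rangle$, $\langle z|a^{\dagger}=\bar z\langle z|$, $\langle z|z\rangle=1$. The numbers $S_\lambda^{(r,r)}(n,k)$, $0\le k\le nr$, are defined by the normal ordering identity $\prod_{j=0}^{n-1}\big((a^{\dagger})^{r}a^{r}-j\lambda\big)=\sum_{k=0}^{nr}S_\lambda^{(r,r)}(n,k)(a^{\dagger})^{k}a^{k}$ (equivalently, the same identity with $a^{\dagger}$ replaced by multiplication by $x$ and $a$ by $d/dx$), and $\phi_{n,\lambda}^{(r,r)}(x)=\sum_{k=0}^{nr}S_\lambda^{(r,r)}(n,k)x^k$, $\phi_{n,\lambda}^{(r,r)}=\phi_{n,\lambda}^{(r,r)}(1)$. *)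

theory Defs
  imports Complex_Main
begin

definition ffact :: "real \<Rightarrow> nat \<Rightarrow> real" where
  "ffact x m = (\<Prod>i<m. x - real i)"

definition gfact :: "real \<Rightarrow> nat \<Rightarrow> real \<Rightarrow> real" where
  "gfact y n lam = (\<Prod>i<n. y - real i * lam)"

text \<open>States are coefficient sequences in the number basis |m>.\<close>
type_synonym state = "nat \<Rightarrow> complex"

definition ann :: "state \<Rightarrow> state" where
  "ann \<psi> = (\<lambda>m. complex_of_real (sqrt (real (Suc m))) * \<psi> (Suc m))"

definition adag :: "state \<Rightarrow> state" where
  "adag \<psi> = (\<lambda>m. if m = 0 then 0 else complex_of_real (sqrt (real m)) * \<psi> (m - 1))"

definition normal_op :: "nat \<Rightarrow> state \<Rightarrow> state" where
  "normal_op k \<psi> = (adag ^^ k) ((ann ^^ k) \<psi>)"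

fun prod_op :: "real \<Rightarrow> nat \<Rightarrow> nat \<Rightarrow> state \<Rightarrow> state" where
  "prod_op lam r 0 = id"
| "prod_op lam r (Suc j) =
     (\<lambda>\<psi>. (\<lambda>m. normal_op r \<psi> m - complex_of_real (real j * lam) * \<psi> m)) \<circ> prod_op lam r j"

definition S_lam :: "real \<Rightarrow> nat \<Rightarrow> nat \<Rightarrow> nat \<Rightarrow> real" where
  "S_lam lam r n = (THE c. (\<forall>k > n * r. c k = 0) \<and>
      (\<forall>\<psi>. prod_op lam r n \<psi> =
             (\<lambda>m. \<Sum>k\<le>n * r. complex_of_real (c k) * normal_op k \<psi> m)))"

definition phi :: "real \<Rightarrow> nat \<Rightarrow> nat \<Rightarrow> real \<Rightarrow> real" where
  "phi lam r n x = (\<Sum>k\<le>n * r. S_lam lam r n k * x ^ k)"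

definition coherent :: "complex \<Rightarrow> state" where
  "coherent z = (\<lambda>m. complex_of_real (exp (- (cmod z)\<^sup>2 / 2)) * z ^ m
                      / complex_of_real (sqrt (fact m)))"

definition braket :: "state \<Rightarrow> state \<Rightarrow> complex" where
  "braket \<phi> \<psi> = (\<Sum>m. cnj (\<phi> m) * \<psi> m)"

end

theory Submission
  imports Defs "HOL-Computational_Algebra.Polynomial"
begin


lemma ffact_Suc: "ffact x (Suc k) = x * ffact (x - 1) k"
proof -
  have "(\<Prod>i<k. x - real (Suc i)) = (\<Prod>i<k. (x - 1) - real i)"
    by (intro prod.cong) auto
  then show ?thesis unfolding ffact_def by (simp only: prod.lessThan_Suc_shift) simp
qed

lemma ffact_nonneg: "k \<le> m \<Longrightarrow> ffact (real m) k \<ge> 0"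
  unfolding ffact_def by (intro prod_nonneg) auto

lemma ffact_zero: "m < k \<Longrightarrow> ffact (real m) k = 0"
  unfolding ffact_def by (rule prod_zero) (auto intro!: bexI[of _ m])

lemma ann_pow: "(ann ^^ k) \<psi> m = complex_of_real (sqrt (ffact (real (m + k)) k)) * \<psi> (m + k)"
proof (induction k arbitrary: \<psi>)
  case 0 then show ?case by (simp add: ffact_def)
next
  case (Suc k)
  have "(ann ^^ Suc k) \<psi> m = (ann ^^ k) (ann \<psi>) m" by (simp only: funpow_Suc_right comp_apply)
  also have "\<dots> = complex_of_real (sqrt (ffact (real (m + k)) k)) * (complex_of_real (sqrt (real (Suc (m+k)))) * \<psi> (Suc (m + k)))"
    by (simp add: Suc ann_def)
  also have "\<dots> = complex_of_real (sqrt (ffact (real (m + Suc k)) (Suc k))) * \<psi> (m + Suc k)"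
    by (simp add: ffact_Suc real_sqrt_mult mult_ac)
  finally show ?case .
qed

lemma adag_pow: "(adag ^^ k) \<phi> m = (if m < k then 0 else complex_of_real (sqrt (ffact (real m) k)) * \<phi> (m - k))"
proof (induction k arbitrary: m)
  case 0 then show ?case by (simp add: ffact_def)
next
  case (Suc k)
  show ?case
  proof (cases m)
    case 0 then show ?thesis by (simp add: adag_def)
  next
    case (Suc m')
    have "(adag ^^ Suc k) \<phi> m = complex_of_real (sqrt (real m)) * (adag ^^ k) \<phi> m'"
      using Suc by (simp add: adag_def)
    then show ?thesis using Suc.IH[of m'] Suc
      by (simp add: ffact_Suc real_sqrt_mult)
  qed
qed

lemma normal_op_diag: "normal_op k \<psi> m = complex_of_real (ffact (real m) k) * \<psi> m"
proof (cases "m < k")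
  case True then show ?thesis by (simp add: normal_op_def adag_pow ffact_zero)
next
  case False
  then have e: "m - k + k = m" by simp
  have a: "ffact (real m) k \<ge> 0" using ffact_nonneg[of k m] False by simp
  have b: "complex_of_real (sqrt (ffact (real m) k)) * complex_of_real (sqrt (ffact (real m) k)) = complex_of_real (ffact (real m) k)"
    by (simp only: of_real_mult[symmetric] real_sqrt_mult_self abs_of_nonneg[OF a])
  show ?thesis using False by (simp add: normal_op_def adag_pow ann_pow e mult.assoc[symmetric] b)
qed

lemma prod_op_diag: "prod_op lam r n \<psi> m = complex_of_real (gfact (ffact (real m) r) n lam) * \<psi> m"
proof (induction n arbitrary: m)
  case 0 then show ?case by (simp add: gfact_def)
next
  case (Suc j)
  show ?case by (simp add: normal_op_diag Suc gfact_def algebra_simps)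
qed



definition ffpoly :: "nat \<Rightarrow> real poly" where
  "ffpoly d = (\<Prod>i<d. [:- real i, 1:])"

lemma ffpoly_props: "degree (ffpoly d) = d \<and> coeff (ffpoly d) d = 1 \<and> ffpoly d \<noteq> 0"
proof (induction d)
  case 0 then show ?case by (simp add: ffpoly_def)
next
  case (Suc d)
  have e: "ffpoly (Suc d) = ffpoly d * [:- real d, 1:]" by (simp add: ffpoly_def)
  have d: "degree (ffpoly (Suc d)) = Suc d" unfolding e using Suc
    by (subst degree_mult_eq) auto
  have "lead_coeff (ffpoly (Suc d)) = 1" unfolding e lead_coeff_mult using Suc by simp
  then show ?case using d by auto
qed

lemma poly_ffpoly: "poly (ffpoly d) x = ffact x d"
  by (simp add: ffpoly_def ffact_def poly_prod)

lemma poly_rep: "degree P \<le> N \<Longrightarrow> \<exists>c. (\<forall>k>N. c k = 0) \<and> (\<forall>x. poly P x = (\<Sum>k\<le>N. c k * ffact x k))"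
proof (induction N arbitrary: P)
  case 0
  then show ?case
    by (intro exI[of _ "\<lambda>k. if k = 0 then coeff P 0 else 0"])
       (auto simp: ffact_def intro: poly_0_coeff_0 elim!: degree0_coeffs[THEN exE])
next
  case (Suc N)
  define Q where "Q = P - smult (coeff P (Suc N)) (ffpoly (Suc N))"
  have "degree Q \<le> N"
  proof (rule degree_le, intro allI impI)
    fix i assume "N < i"
    then consider "i = Suc N" | "i > Suc N" by linarith
    then show "coeff Q i = 0"
    proof cases
      case 1 then show ?thesis using ffpoly_props[of "Suc N"] by (simp add: Q_def)
    next
      case 2 then show ?thesis using ffpoly_props[of "Suc N"] Suc.prems
        by (simp add: Q_def coeff_eq_0)
    qed
  qed
  then obtain c where c0: "\<forall>k>N. c k = 0" and c: "\<forall>x. poly Q x = (\<Sum>k\<le>N. c k * ffact x k)"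
    using Suc.IH by blast
  define c' where "c' = c(Suc N := coeff P (Suc N))"
  have "\<forall>k>Suc N. c' k = 0" using c0 by (simp add: c'_def)
  moreover have "poly P x = (\<Sum>k\<le>Suc N. c' k * ffact x k)" for x
  proof -
    have "poly P x = poly Q x + coeff P (Suc N) * ffact x (Suc N)"
      by (simp add: Q_def poly_ffpoly)
    also have "(\<Sum>k\<le>N. c k * ffact x k) = (\<Sum>k\<le>N. c' k * ffact x k)"
      by (intro sum.cong) (auto simp: c'_def)
    then have "poly Q x = (\<Sum>k\<le>N. c' k * ffact x k)" using c by simp
    finally show ?thesis by (simp add: c'_def)
  qed
  ultimately show ?case by blast
qed

lemma g_poly: "\<exists>P. degree P \<le> n * r \<and> (\<forall>x. poly P x = gfact (ffact x r) n lam)"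
proof (intro exI conjI allI)
  let ?P = "\<Prod>i<n. ffpoly r - [:real i * lam:]"
  show "poly ?P x = gfact (ffact x r) n lam" for x
    by (simp add: poly_prod poly_ffpoly gfact_def)
  have "degree ?P \<le> (\<Sum>i<n. (degree \<circ> (\<lambda>i. ffpoly r - [:real i * lam:])) i)"
    by (rule degree_prod_sum_le) simp
  also have "\<dots> \<le> (\<Sum>i<n. r)"
  proof (rule sum_mono)
    fix i show "(degree \<circ> (\<lambda>i. ffpoly r - [:real i * lam:])) i \<le> r"
      using degree_diff_le_max[of "ffpoly r" "[:real i * lam:]"] ffpoly_props[of r] by simp
  qed
  finally show "degree ?P \<le> n * r" by (simp add: mult.commute)
qed



lemma ffact_choose: "ffact (real p) j = real (p choose j) * fact j"
proof (induction j arbitrary: p)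
  case 0 then show ?case by (simp add: ffact_def)
next
  case (Suc j)
  show ?case
  proof (cases p)
    case 0 then show ?thesis by (simp add: ffact_Suc)
  next
    case (Suc p')
    have "ffact (real p) (Suc j) = real (Suc p') * (real (p' choose j) * fact j)"
      using Suc.IH[of p'] Suc by (simp add: ffact_Suc)
    moreover have "real (Suc p') * real (p' choose j) = real (Suc p' choose Suc j) * real (Suc j)"
      by (metis Suc_times_binomial_eq of_nat_mult)
    ultimately show ?thesis using Suc by (simp add: algebra_simps)
  qed
qed

lemma alt_sum0: "(\<Sum>q\<le>d. (-1::real) ^ (d - q) * real (d choose q)) = (if d = 0 then 1 else 0)"
proof (cases "d = 0")
  case True then show ?thesis by simp
next
  case False
  have "(\<Sum>q\<le>d. (-1::real) ^ (d - q) * real (d choose q)) = (\<Sum>q\<le>d. (-1) ^ d * ((-1) ^ q * real (d choose q)))"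
  proof (intro sum.cong refl)
    fix q assume "q \<in> {..d}"
    then have "(-1::real) ^ d = (-1) ^ (d - q) * (-1) ^ q" by (simp add: power_add[symmetric])
    then have "(-1::real) ^ (d - q) = (-1) ^ d * (-1) ^ q"
      by (metis (no_types, lifting) mult.commute mult.left_neutral power_minus_mult power_one_right
          left_minus_one_mult_self mult.assoc)
    then show "(-1::real) ^ (d - q) * real (d choose q) = (-1) ^ d * ((-1) ^ q * real (d choose q))" by simp
  qed
  also have "\<dots> = 0" using choose_alternating_sum[of d] False by (simp add: sum_distrib_left[symmetric])
  finally show ?thesis using False by simp
qed

lemma alt_sum: assumes "j \<le> k"
  shows "(\<Sum>p\<le>k. (-1::real) ^ (k - p) * real (k choose p) * real (p choose j)) = (if j = k then 1 else 0)"
proof -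
  have "(\<Sum>p\<le>k. (-1::real) ^ (k - p) * real (k choose p) * real (p choose j))
      = (\<Sum>p\<in>{j..k}. (-1::real) ^ (k - p) * real (k choose p) * real (p choose j))"
    by (rule sum.mono_neutral_right) auto
  also have "\<dots> = (\<Sum>p\<in>{j..k}. real (k choose j) * ((-1::real) ^ (k - p) * real ((k - j) choose (p - j))))"
  proof (intro sum.cong refl)
    fix p assume "p \<in> {j..k}"
    then have "(k choose p) * (p choose j) = (k choose j) * ((k - j) choose (p - j))"
      by (intro choose_mult) auto
    then have "real (k choose p) * real (p choose j) = real (k choose j) * real ((k - j) choose (p - j))"
      by (metis of_nat_mult)
    then show "(-1::real) ^ (k - p) * real (k choose p) * real (p choose j) = real (k choose j) * ((-1::real) ^ (k - p) * real ((k - j) choose (p - j)))"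
      by (simp add: algebra_simps)
  qed
  also have "\<dots> = real (k choose j) * (\<Sum>p\<in>{0 + j..(k - j) + j}. (-1::real) ^ (k - p) * real ((k - j) choose (p - j)))"
    using assms by (simp add: sum_distrib_left)
  also have "(\<Sum>p\<in>{0 + j..(k - j) + j}. (-1::real) ^ (k - p) * real ((k - j) choose (p - j)))
       = (\<Sum>q\<in>{0..k - j}. (-1::real) ^ (k - j - q) * real ((k - j) choose q))"
    by (subst sum.shift_bounds_cl_nat_ivl) (simp add: diff_diff_add add.commute)
  also have "\<dots> = (if k - j = 0 then 1 else 0)" using alt_sum0[of "k - j"] by (simp add: atLeast0AtMost)
  finally show ?thesis using assms by auto
qed

lemma inner_sum: "(\<Sum>p\<le>k. (-1::real) ^ (k - p) * real (k choose p) * ffact (real p) j) = (if j = k then fact k else 0)"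
proof (cases "j \<le> k")
  case True
  have "(\<Sum>p\<le>k. (-1::real) ^ (k - p) * real (k choose p) * ffact (real p) j)
      = fact j * (\<Sum>p\<le>k. (-1::real) ^ (k - p) * real (k choose p) * real (p choose j))"
    by (simp add: ffact_choose sum_distrib_left algebra_simps)
  then show ?thesis using alt_sum[OF True] by auto
next
  case False
  then show ?thesis by (auto simp: ffact_zero intro!: sum.neutral)
qed

lemma newton:
  assumes g: "\<And>m::nat. g m = (\<Sum>j\<le>N. c j * ffact (real m) j)" and k: "k \<le> N"
  shows "c k = (\<Sum>p\<le>k. (-1) ^ (k - p) / fact k * real (k choose p) * g p)"
proof -
  have "(\<Sum>p\<le>k. (-1::real) ^ (k - p) * real (k choose p) * g p)
      = (\<Sum>p\<le>k. \<Sum>j\<le>N. c j * ((-1::real) ^ (k - p) * real (k choose p) * ffact (real p) j))"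
    by (simp add: g sum_distrib_left algebra_simps)
  also have "\<dots> = (\<Sum>j\<le>N. c j * (\<Sum>p\<le>k. (-1::real) ^ (k - p) * real (k choose p) * ffact (real p) j))"
    by (subst sum.swap) (simp add: sum_distrib_left)
  also have "\<dots> = (\<Sum>j\<le>N. (if j = k then c k * fact k else 0))"
    by (intro sum.cong refl) (simp add: inner_sum)
  also have "\<dots> = c k * fact k" using k by simp
  finally have "(\<Sum>p\<le>k. (-1::real) ^ (k - p) * real (k choose p) * g p) = c k * fact k" .
  then have "c k = (\<Sum>p\<le>k. (-1::real) ^ (k - p) * real (k choose p) * g p) / fact k" by simp
  then show ?thesis by (simp add: sum_divide_distrib)
qed



lemma swap_tri: "(\<Sum>k\<le>(N::nat). \<Sum>p\<le>k. f p k) = (\<Sum>p\<le>N. \<Sum>k=p..N. (f p k :: real))"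
proof (induction N)
  case 0 then show ?case by simp
next
  case (Suc N)
  have "(\<Sum>p\<le>Suc N. \<Sum>k=p..Suc N. f p k) = (\<Sum>p\<le>N. \<Sum>k=p..Suc N. f p k) + f (Suc N) (Suc N)"
    by simp
  also have "(\<Sum>p\<le>N. \<Sum>k=p..Suc N. f p k) = (\<Sum>p\<le>N. (\<Sum>k=p..N. f p k) + f p (Suc N))"
    by (intro sum.cong refl) (simp add: sum.atLeast_Suc_atMost_Suc_shift)
  finally show ?case using Suc by (simp add: sum.distrib)
qed

definition G :: "real \<Rightarrow> nat \<Rightarrow> nat \<Rightarrow> nat \<Rightarrow> real" where
  "G lam r n m = gfact (ffact (real m) r) n lam"

definition cN :: "real \<Rightarrow> nat \<Rightarrow> nat \<Rightarrow> nat \<Rightarrow> real" where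
  "cN lam r n k = (if k \<le> n * r then (\<Sum>p\<le>k. (-1) ^ (k - p) / fact k * real (k choose p) * G lam r n p) else 0)"

lemma rep_imp_cN:
  assumes c0: "\<forall>k>n * r. c k = 0" and g: "\<And>m::nat. G lam r n m = (\<Sum>j\<le>n * r. c j * ffact (real m) j)"
  shows "c = cN lam r n"
proof
  fix k show "c k = cN lam r n k"
    using newton[OF g, of k] c0 by (auto simp: cN_def)
qed

lemma S_lam_eq: "S_lam lam r n = cN lam r n"
proof -
  let ?P = "\<lambda>c. (\<forall>k > n * r. c k = 0) \<and>
      (\<forall>\<psi>. prod_op lam r n \<psi> =
             (\<lambda>m. \<Sum>k\<le>n * r. complex_of_real (c k) * normal_op k \<psi> m))"
  obtain P where P: "degree P \<le> n * r" "\<forall>x. poly P x = gfact (ffact x r) n lam"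
    using g_poly by blast
  obtain c where c0: "\<forall>k>n * r. c k = 0" and c: "\<forall>x. poly P x = (\<Sum>k\<le>n * r. c k * ffact x k)"
    using poly_rep[OF P(1)] by blast
  have gc: "G lam r n m = (\<Sum>j\<le>n * r. c j * ffact (real m) j)" for m
    using P(2) c by (simp add: G_def)
  have ceq: "c = cN lam r n" by (rule rep_imp_cN[OF c0 gc])
  have "?P (cN lam r n)"
  proof (intro conjI allI impI ext)
    fix k assume "k > n * r" then show "cN lam r n k = 0" by (simp add: cN_def)
  next
    fix \<psi> m
    have "prod_op lam r n \<psi> m = complex_of_real (G lam r n m) * \<psi> m"
      by (simp add: prod_op_diag G_def)
    also have "\<dots> = (\<Sum>k\<le>n * r. complex_of_real (cN lam r n k) * normal_op k \<psi> m)"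
      by (simp add: gc ceq normal_op_diag sum_distrib_right mult.assoc)
    finally show "prod_op lam r n \<psi> m = (\<Sum>k\<le>n * r. complex_of_real (cN lam r n k) * normal_op k \<psi> m)" .
  qed
  moreover have "c' = cN lam r n" if "?P c'" for c'
  proof (rule rep_imp_cN)
    show "\<forall>k>n * r. c' k = 0" using that by blast
    fix m
    have "prod_op lam r n (\<lambda>_. 1) m = (\<Sum>k\<le>n * r. complex_of_real (c' k) * normal_op k (\<lambda>_. 1) m)"
      using that by metis
    then have "complex_of_real (G lam r n m) = complex_of_real (\<Sum>j\<le>n * r. c' j * ffact (real m) j)"
      by (simp add: prod_op_diag normal_op_diag G_def)
    then show "G lam r n m = (\<Sum>j\<le>n * r. c' j * ffact (real m) j)" by (simp only: of_real_eq_iff)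
  qed
  ultimately show ?thesis unfolding S_lam_def by (rule the_equality)
qed

lemma ser: "(\<lambda>m. x ^ m * ffact (real m) k / fact m) sums (x ^ k * exp x)"
proof -
  have e: "(\<lambda>i. x ^ i / fact i) sums exp x" using exp_converges[of x] by (simp add: divide_inverse mult.commute)
  have "(\<lambda>i. x ^ (i + k) * ffact (real (i + k)) k / fact (i + k)) = (\<lambda>i. x ^ k * (x ^ i / fact i))"
  proof
    fix i
    have h: "ffact (real (i + k)) k / fact (i + k) = 1 / fact i"
    proof -
      have "ffact (real (i + k)) k = real ((i + k) choose k) * fact k" by (rule ffact_choose)
      also have "real ((i + k) choose k) = fact (i + k) / (fact k * fact i)"
        by (subst binomial_fact) auto
      finally show ?thesis by simp
    qed
    then show "x ^ (i + k) * ffact (real (i + k)) k / fact (i + k) = x ^ k * (x ^ i / fact i)"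
      by (simp only: times_divide_eq_right[symmetric] h) (simp add: power_add)
  qed
  then have "(\<lambda>i. x ^ (i + k) * ffact (real (i + k)) k / fact (i + k)) sums (x ^ k * exp x)"
    using sums_mult[OF e] by simp
  then show ?thesis by (subst (asm) sums_iff_shift) (simp add: ffact_zero)
qed

lemma braket_eq: "braket (coherent z) (prod_op lam r n (coherent z))
     = complex_of_real (\<Sum>k\<le>n * r. cN lam r n k * ((cmod z)\<^sup>2) ^ k)"
proof -
  define x where "x = (cmod z)\<^sup>2"
  have tm: "cnj (coherent z m) * prod_op lam r n (coherent z) m
      = complex_of_real (exp (- x) * (\<Sum>k\<le>n * r. cN lam r n k * (x ^ m * ffact (real m) k / fact m)))" for m
  proof -
    have nm: "(cmod (coherent z m))\<^sup>2 = exp (- x) * x ^ m / fact m"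
    proof -
      have "cmod (coherent z m) = exp (- x / 2) * cmod z ^ m / sqrt (fact m)"
        by (simp add: coherent_def norm_mult norm_divide norm_power x_def)
      then have "(cmod (coherent z m))\<^sup>2 = (exp (- x / 2))\<^sup>2 * (cmod z ^ m)\<^sup>2 / fact m"
        by (simp add: power_mult_distrib power_divide)
      also have "(exp (- x / 2))\<^sup>2 = exp (- x)"
        by (simp add: power2_eq_square exp_add[symmetric])
      also have "(cmod z ^ m)\<^sup>2 = x ^ m"
        by (simp add: x_def power_mult[symmetric] mult.commute)
      finally show ?thesis by simp
    qed
    have "cnj (coherent z m) * prod_op lam r n (coherent z) m
        = complex_of_real (G lam r n m) * (coherent z m * cnj (coherent z m))"
      by (simp add: prod_op_diag G_def)
    also have "coherent z m * cnj (coherent z m) = complex_of_real (exp (- x) * x ^ m / fact m)"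
      by (simp add: complex_norm_square[symmetric] nm)
    also have "G lam r n m = (\<Sum>j\<le>n * r. cN lam r n j * ffact (real m) j)"
    proof -
      obtain P where P: "degree P \<le> n * r" "\<forall>x. poly P x = gfact (ffact x r) n lam"
        using g_poly by blast
      obtain c where c0: "\<forall>k>n * r. c k = 0" and c: "\<forall>x. poly P x = (\<Sum>k\<le>n * r. c k * ffact x k)"
        using poly_rep[OF P(1)] by blast
      have gc: "G lam r n m = (\<Sum>j\<le>n * r. c j * ffact (real m) j)" for m
        using P(2) c by (simp add: G_def)
      then show ?thesis using rep_imp_cN[OF c0 gc] by simp
    qed
    finally show ?thesis
      by (simp only: of_real_mult[symmetric]) (simp add: sum_distrib_left sum_distrib_right algebra_simps)
  qed
  have "(\<lambda>m. exp (- x) * (\<Sum>k\<le>n * r. cN lam r n k * (x ^ m * ffact (real m) k / fact m)))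
        sums (exp (- x) * (\<Sum>k\<le>n * r. cN lam r n k * (x ^ k * exp x)))"
    by (intro sums_mult sums_sum ser)
  also have "exp (- x) * (\<Sum>k\<le>n * r. cN lam r n k * (x ^ k * exp x)) = (\<Sum>k\<le>n * r. cN lam r n k * x ^ k)"
    by (simp add: sum_distrib_left algebra_simps exp_minus field_simps)
  finally have "(\<lambda>m. cnj (coherent z m) * prod_op lam r n (coherent z) m) sums complex_of_real (\<Sum>k\<le>n * r. cN lam r n k * x ^ k)"
    unfolding tm by (rule sums_of_real)
  then show ?thesis unfolding braket_def x_def by (rule sums_unique[symmetric])
qed


theorem theorem6:
  fixes lam :: real and r n :: nat and z :: complex
  assumes "r \<ge> 1" and "n \<ge> 1"
  shows "complex_of_real (phi lam r n ((cmod z)\<^sup>2))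
           = braket (coherent z) (prod_op lam r n (coherent z))
       \<and> braket (coherent z) (prod_op lam r n (coherent z))
           = complex_of_real (\<Sum>p\<le>n * r. \<Sum>k=p..n * r.
                 (-1) ^ (k - p) / fact k * real (k choose p)
                 * gfact (ffact (real p) r) n lam * ((cmod z)\<^sup>2) ^ k)
       \<and> (cmod z = 1 \<longrightarrow>
            complex_of_real (phi lam r n 1)
              = braket (coherent z) (prod_op lam r n (coherent z))
          \<and> braket (coherent z) (prod_op lam r n (coherent z))
              = complex_of_real (\<Sum>p\<le>n * r. \<Sum>k=p..n * r.
                 (-1) ^ (k - p) / fact k * real (k choose p)
                 * gfact (ffact (real p) r) n lam))"
proof -
  have ph: "phi lam r n y = (\<Sum>k\<le>n * r. cN lam r n k * y ^ k)" for y
    by (simp add: phi_def S_lam_eq)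
  have sw: "(\<Sum>k\<le>n * r. cN lam r n k * y ^ k) = (\<Sum>p\<le>n * r. \<Sum>k=p..n * r.
                 (-1) ^ (k - p) / fact k * real (k choose p)
                 * gfact (ffact (real p) r) n lam * y ^ k)" for y
  proof -
    have "(\<Sum>k\<le>n * r. cN lam r n k * y ^ k) = (\<Sum>k\<le>n * r. \<Sum>p\<le>k.
                 (-1) ^ (k - p) / fact k * real (k choose p)
                 * gfact (ffact (real p) r) n lam * y ^ k)"
      by (intro sum.cong refl) (simp add: cN_def G_def sum_distrib_right)
    then show ?thesis by (simp add: swap_tri)
  qed
  have A: "complex_of_real (phi lam r n ((cmod z)\<^sup>2)) = braket (coherent z) (prod_op lam r n (coherent z))"
    by (simp add: braket_eq ph)
  have B: "braket (coherent z) (prod_op lam r n (coherent z))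
           = complex_of_real (\<Sum>p\<le>n * r. \<Sum>k=p..n * r.
                 (-1) ^ (k - p) / fact k * real (k choose p)
                 * gfact (ffact (real p) r) n lam * ((cmod z)\<^sup>2) ^ k)"
    by (simp only: braket_eq sw)
  show ?thesis
  proof (intro conjI impI A B)
    assume z1: "cmod z = 1"
    show "complex_of_real (phi lam r n 1) = braket (coherent z) (prod_op lam r n (coherent z))"
      using A z1 by simp
    show "braket (coherent z) (prod_op lam r n (coherent z))
              = complex_of_real (\<Sum>p\<le>n * r. \<Sum>k=p..n * r.
                 (-1) ^ (k - p) / fact k * real (k choose p)
                 * gfact (ffact (real p) r) n lam)"
      using B z1 by simp
  qed
qed

end
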